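(* Let $\mathcal{G}(t)$ be a matrix-weighted switching network satisfying Assumption 1 (described in the context), and consider $\dot{\boldsymbol{x}}(t)=-L(t)\boldsymbol{x}(t)$, $\boldsymbol{x}(t)\in\mathbb{R}^{dn}$. Suppose there exist a subsequence $\{t_{k_l}\}_{l\in\mathbb{N}}$ of $\{t_k\}$ with $t_{k_0}=t_0=0$ and $\Delta t_{k_l}=t_{k_{l+1}}-t_{k_l}<\infty$, and a scalar $q\in(0,1)$, such that for all $l\in\mathbb{N}$, $$\mathrm{null}(\widetilde{L}_{[t_{k_l},t_{k_{l+1}})})=\mathrm{null}(\widetilde{L}_{[t_{k_{l+1}},t_{k_{l+2}})})$$ and $$\mu_{m+1}\big(\Phi(t_{k_{l+1}},t_{k_l})^\top\Phi(t_{k_{l+1}},t_{k_l})\big)\le q,$$ where $m=\dim\mathrm{null}(\widetilde{L}_{[t_{k_l},t_{k_{l+1}})})$. Then the system admits cluster consensus. Moreover, writing $\mathrm{null}(\widetilde{L}_{[t_{k_l},t_{k_{l+1}})})=\mathrm{span}\{\boldsymbol{\xi}_1,\dots,\boldsymbol{\xi}_m\}$ (for all $l$) with $\boldsymbol{\xi}_i^\top\boldsymbol{\xi}_j=1$ if $i=j$ and $0$ otherwise, the cluster consensus value is $$\boldsymbol{x}^*=\sum_{i=1}^{m}(\boldsymbol{\xi}_i^\top\boldsymbol{x}(0))\boldsymbol{\xi}_i.$$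
   Context: A matrix-weighted switching network $\mathcal{G}(t)=(\mathcal{V},\mathcal{E}(t),A(t))$ has node set $\mathcal{V}=\{1,\dots,n\}$, $n>1$; each edge $(i,j)\in\mathcal{E}(t)$ carries a symmetric weight $A_{ij}(t)\in\mathbb{R}^{d\times d}$ which is either positive (semi-)definite or negative (semi-)definite, with $A_{ij}=A_{ji}$, $A_{ii}=0$, $A_{ij}(t)=0$ if $(i,j)\notin\mathcal{E}(t)$; standing assumption: for each pair $(i,j)$ the weight $A_{ij}(t)$ has the same sign type for all $t$. Set $|A_{ij}|=A_{ij}$ if $A_{ij}\succeq0$ and $-A_{ij}$ if $A_{ij}\preceq0$; $\mathrm{sgn}(A)$ is $1$, $-1$, $0$ for nonzero PSD, nonzero NSD, zero $A$. With $A=[A_{ij}]\in\mathbb{R}^{dn\times dn}$ and $D=\mathrm{diag}(D_1,\dots,D_n)$, $D_i=\sum_{j:(i,j)\in\mathcal{E}}|A_{ij}|$, the matrix-valued Laplacian is $L=D-A$; $\dot{\boldsymbol{x}}=-L(t)\boldsymbol{x}$ is the stacked form of $\dot{\boldsymbol{x}}_i=-\sum_j|A_{ij}|(\boldsymbol{x}_i-\mathrm{sgn}(A_{ij})\boldsymbol{x}_j)$, $\boldsymbol{x}=[\boldsymbol{x}_1^\top,\dots,\boldsymbol{x}_n^\top]^\top$. Assumption 1: there is a sequence $\{t_k\}_{k\in\mathbb{N}}$ with $t_0=0$, $t_k\to\infty$, $t_{k+1}-t_k\ge\alpha>0$, and $\mathcal{G}(t)$ is constant on each $[t_k,t_{k+1})$,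 with Laplacian $L^k$ there and $\Delta t_k=t_{k+1}-t_k$. For $k'<k''$: $\widetilde{L}_{[t_{k'},t_{k''})}=\frac{1}{t_{k''}-t_{k'}}\int_{t_{k'}}^{t_{k''}}L(t)dt$ (Laplacian of the integral network), and $\Phi(t_{k''},t_{k'})=e^{-L^{k''-1}\Delta t_{k''-1}}\cdots e^{-L^{k'}\Delta t_{k'}}$. For a symmetric PSD matrix $P=\Phi^\top\Phi\in\mathbb{R}^{dn\times dn}$ with at least $m$ eigenvalues equal to 1, $\mu_{m+1}(P)$ denotes the $(m+1)$-th largest eigenvalue of $P$. Cluster consensus: there is a partition $\mathcal{V}_1,\dots,\mathcal{V}_l$ of $\mathcal{V}$ such that all limits $\lim_{t\to\infty}\boldsymbol{x}_i(t)$ exist, agents in the same part have equal limits, and agents in different parts have different limits. *)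

theory Defs
  imports "HOL-Analysis.Analysis" "HOL-Library.Disjoint_Sets"
begin

text \<open>Agents are indexed by a finite type 'n (n = CARD('n)), components of the
local states by a finite type 'd (d = CARD('d)). The stacked state in R^(dn) is a
vector indexed by pairs (i,a) :: 'n \<times> 'd; block i of it is the state of agent i.\<close>

definition block :: "real^('n::finite \<times> 'd::finite) \<Rightarrow> 'n \<Rightarrow> real^'d" where
  "block x i = (\<chi> a. x $ (i, a))"

definition psd :: "real^'k::finite^'k \<Rightarrow> bool" where
  "psd M \<longleftrightarrow> (\<forall>v. 0 \<le> v \<bullet> (M *v v))"

definition nsd :: "real^'k::finite^'k \<Rightarrow> bool" where
  "nsd M \<longleftrightarrow> (\<forall>v. v \<bullet> (M *v v) \<le> 0)"

definition mabs :: "real^'k::finite^'k \<Rightarrow> real^'k^'k" where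
  "mabs M = (if psd M then M else - M)"

text \<open>Matrix-valued Laplacian L = D - A of the matrix-weighted network with weights
W i j :: real^'d^'d (W i j = 0 when (i,j) is not an edge), D_i = sum_j |W i j|.\<close>
definition lap :: "('n::finite \<Rightarrow> 'n \<Rightarrow> real^'d::finite^'d) \<Rightarrow> real^('n \<times> 'd)^('n \<times> 'd)" where
  "lap W = (\<chi> p q. (if fst p = fst q then (\<Sum>j\<in>UNIV. mabs (W (fst p) j)) $ snd p $ snd q else 0)
                     - W (fst p) (fst q) $ snd p $ snd q)"

definition matpow :: "real^'k::finite^'k \<Rightarrow> nat \<Rightarrow> real^'k^'k" where
  "matpow M j = (((**) M) ^^ j) (mat 1)"

definition mexp :: "real^'k::finite^'k \<Rightarrow> real^'k^'k" where
  "mexp M = (\<Sum>j. (1 / (fact j :: real)) *\<^sub>R matpow M j)"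

definition Ltilde :: "(real \<Rightarrow> 'n::finite \<Rightarrow> 'n \<Rightarrow> real^'d::finite^'d) \<Rightarrow> real \<Rightarrow> real
    \<Rightarrow> real^('n \<times> 'd)^('n \<times> 'd)" where
  "Ltilde W a b = (1 / (b - a)) *\<^sub>R integral {a..b} (\<lambda>t. lap (W t))"

definition Phi :: "(real \<Rightarrow> 'n::finite \<Rightarrow> 'n \<Rightarrow> real^'d::finite^'d) \<Rightarrow> (nat \<Rightarrow> real) \<Rightarrow> nat \<Rightarrow> nat
    \<Rightarrow> real^('n \<times> 'd)^('n \<times> 'd)" where
  "Phi W tk k2 k1 = fold (\<lambda>k P. mexp (- ((tk (Suc k) - tk k) *\<^sub>R lap (W (tk k)))) ** P) [k1..<k2] (mat 1)"

definition null_space :: "real^'k::finite^'k \<Rightarrow> (real^'k) set" where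
  "null_space M = {v. M *v v = 0}"

text \<open>Eigenvalues, multiplicity (dimension of the eigenspace; for the symmetric
matrices considered this is the usual multiplicity), and the list of eigenvalues
in non-increasing order, repeated according to multiplicity.\<close>
definition eigvals :: "real^'k::finite^'k \<Rightarrow> real set" where
  "eigvals M = {e. \<exists>v. v \<noteq> 0 \<and> M *v v = e *\<^sub>R v}"

definition eig_mult :: "real^'k::finite^'k \<Rightarrow> real \<Rightarrow> nat" where
  "eig_mult M e = dim {v. M *v v = e *\<^sub>R v}"

definition eig_desc :: "real^'k::finite^'k \<Rightarrow> real list" where
  "eig_desc M = rev (concat (map (\<lambda>e. replicate (eig_mult M e) e) (sorted_list_of_set (eigvals M))))"

text \<open>mu k M: the k-th largest eigenvalue (k \<ge> 1).\<close>
definition mu :: "nat \<Rightarrow> real^'k::finite^'k \<Rightarrow> real" where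
  "mu k M = eig_desc M ! (k - 1)"

definition cluster_consensus :: "(real \<Rightarrow> real^('n::finite \<times> 'd::finite)) \<Rightarrow> bool" where
  "cluster_consensus x \<longleftrightarrow>
     (\<exists>P c. partition_on (UNIV :: 'n set) P \<and>
        (\<forall>i. ((\<lambda>t. block (x t) i) \<longlongrightarrow> c i) at_top) \<and>
        (\<forall>p\<in>P. \<forall>p'\<in>P. \<forall>i\<in>p. \<forall>j\<in>p'. (c i = c j \<longleftrightarrow> p = p')))"

end

theory Submission
  imports Defs
begin

lemma sym_inner:
  fixes M :: "real^'k::finite^'k"
  assumes "transpose M = M"
  shows "(M *v x) \<bullet> y = x \<bullet> (M *v y)"
proof -
  have "x \<bullet> (M *v y) = (x v* M) \<bullet> y" by (simp add: dot_lmul_matrix)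
  also have "x v* M = M *v x" by (metis assms vector_transpose_matrix)
  finally show ?thesis by simp
qed

lemma quad_zero:
  fixes a C :: real
  assumes "\<And>s. 2 * s * a + s^2 * C \<le> 0" "a \<ge> 0"
  shows "a = 0"
proof (rule ccontr)
  assume "a \<noteq> 0" hence a: "a > 0" using assms(2) by simp
  define s where "s = a / (2 * (\<bar>C\<bar> + 1))"
  have s: "s > 0" using a by (simp add: s_def)
  have "2 * s * a + s^2 * C \<le> 0" by (rule assms(1))
  hence "s * (2 * a + s * C) \<le> 0" by (simp add: power2_eq_square algebra_simps)
  hence "2 * a + s * C \<le> 0" using s by (simp add: mult_le_0_iff)
  moreover have "s * \<bar>C\<bar> \<le> a / 2"
  proof -
    have "s * \<bar>C\<bar> = (a / 2) * (\<bar>C\<bar> / (\<bar>C\<bar> + 1))" unfolding s_def by simp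
    also have "\<dots> \<le> (a / 2) * 1" using a by (intro mult_left_mono) auto
    finally show ?thesis by simp
  qed
  moreover have "s * (- \<bar>C\<bar>) \<le> s * C" using s by (intro mult_left_mono) auto
  ultimately show False using a by linarith
qed

lemma spectral_sub:
  fixes M :: "real^'k::finite^'k"
  assumes symM: "transpose M = M"
  shows "subspace S \<Longrightarrow> (\<forall>z\<in>S. M *v z \<in> S) \<Longrightarrow> \<exists>U lam. U \<subseteq> S \<and> finite U \<and> pairwise orthogonal U \<and>
     (\<forall>u\<in>U. norm u = 1) \<and> span U = S \<and> (\<forall>u\<in>U. M *v u = lam u *\<^sub>R u)"
proof (induction "dim S" arbitrary: S rule: less_induct)
  case less
  show ?case
  proof (cases "S = {0}")
    case True
    then show ?thesis by (intro exI[of _ "{}"]) auto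
  next
    case False
    then obtain z where z: "z \<in> S" "z \<noteq> 0" using less.prems subspace_0 by blast
    define K where "K = S \<inter> sphere 0 1"
    have "compact K" unfolding K_def
      by (metis Int_commute closed_subspace compact_Int_closed compact_sphere less.prems(1))
    moreover have "(1 / norm z) *\<^sub>R z \<in> K" unfolding K_def using z less.prems(1)
      by (simp add: subspace_scale)
    hence "K \<noteq> {}" by blast
    moreover have "continuous_on K (\<lambda>y. y \<bullet> (M *v y))"
      by (intro continuous_intros linear_continuous_on matrix_vector_mul_bounded_linear)
    ultimately obtain y0 where y0: "y0 \<in> K" "\<And>y. y \<in> K \<Longrightarrow> y \<bullet> (M *v y) \<le> y0 \<bullet> (M *v y0)"
      using continuous_attains_sup by metis
    define lam where "lam = y0 \<bullet> (M *v y0)"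
    have y0S: "y0 \<in> S" and y0n: "norm y0 = 1" using y0(1) K_def by auto
    have ray: "z \<bullet> (M *v z) \<le> lam * (z \<bullet> z)" if "z \<in> S" for z
    proof (cases "z = 0")
      case True then show ?thesis by simp
    next
      case False
      define y where "y = (1 / norm z) *\<^sub>R z"
      have "y \<in> K" unfolding K_def y_def using that False less.prems(1)
        by (simp add: subspace_scale)
      hence "y \<bullet> (M *v y) \<le> lam" using y0(2) lam_def by simp
      moreover have "y \<bullet> (M *v y) = (z \<bullet> (M *v z)) / (norm z)^2"
        unfolding y_def by (simp add: matrix_vector_mult_scaleR power2_eq_square)
      ultimately have "z \<bullet> (M *v z) \<le> lam * (norm z)^2" using False
        by (simp add: divide_le_eq)
      then show ?thesis by (simp add: power2_norm_eq_inner)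
    qed
    define w where "w = M *v y0 - lam *\<^sub>R y0"
    have wS: "w \<in> S" unfolding w_def using less.prems y0S by (simp add: subspace_diff subspace_scale)
    have y0y0: "y0 \<bullet> y0 = 1" using y0n by (simp add: norm_eq_1)
    have "w \<bullet> w = 0"
    proof (rule quad_zero)
      fix s :: real
      have "y0 + s *\<^sub>R w \<in> S" using wS y0S less.prems(1) by (simp add: subspace_add subspace_scale)
      hence "(y0 + s *\<^sub>R w) \<bullet> (M *v (y0 + s *\<^sub>R w)) \<le> lam * ((y0 + s *\<^sub>R w) \<bullet> (y0 + s *\<^sub>R w))"
        by (rule ray)
      moreover have "w \<bullet> (M *v y0) = (M *v w) \<bullet> y0" using sym_inner[OF symM] by simp
      moreover have "w \<bullet> (M *v y0) - lam * (w \<bullet> y0) = w \<bullet> w" unfolding w_def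
        by (simp add: inner_diff_right inner_diff_left algebra_simps inner_commute)
      ultimately show "2 * s * (w \<bullet> w) + s^2 * ((w \<bullet> (M *v w)) - lam * (w \<bullet> w)) \<le> 0"
        using y0y0 lam_def
        by (simp add: matrix_vector_right_distrib matrix_vector_mult_scaleR inner_add_left inner_add_right
            algebra_simps power2_eq_square inner_commute)
    qed simp
    hence eig: "M *v y0 = lam *\<^sub>R y0" unfolding w_def by simp
    define S' where "S' = S \<inter> {z. y0 \<bullet> z = 0}"
    have subS': "subspace S'" unfolding S'_def
      using less.prems(1) subspace_orthogonal_to_vector[of y0]
      by (simp add: subspace_inter orthogonal_def)
    have invS': "\<forall>z\<in>S'. M *v z \<in> S'"
    proof
      fix z assume "z \<in> S'"
      hence "z \<in> S" "y0 \<bullet> z = 0" unfolding S'_def by auto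
      moreover have "y0 \<bullet> (M *v z) = (M *v y0) \<bullet> z" using sym_inner[OF symM] by simp
      ultimately show "M *v z \<in> S'" unfolding S'_def using less.prems(2) eig by simp
    qed
    have "S' \<subseteq> S" unfolding S'_def by auto
    moreover have "y0 \<notin> S'" unfolding S'_def using y0y0 by simp
    ultimately have "dim S' < dim S" using y0S less.prems(1)
      by (metis dim_psubset psubsetI subspace_span span_eq_iff subS')
    then obtain U lamU where U: "U \<subseteq> S'" "finite U" "pairwise orthogonal U"
      "\<forall>u\<in>U. norm u = 1" "span U = S'" "\<forall>u\<in>U. M *v u = lamU u *\<^sub>R u"
      using less.hyps[OF _ subS' invS'] by blast
    define U2 where "U2 = insert y0 U"
    have "y0 \<notin> U" using U(1) \<open>y0 \<notin> S'\<close> by auto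
    have orth: "pairwise orthogonal U2" unfolding U2_def
      using U(1,3) unfolding pairwise_insert S'_def
      by (auto simp: orthogonal_def inner_commute)
    have sp: "span U2 = S"
    proof
      show "span U2 \<subseteq> S" unfolding U2_def using U(1) y0S \<open>S' \<subseteq> S\<close> less.prems(1)
        by (metis insert_subset order_trans span_minimal)
    next
      show "S \<subseteq> span U2"
      proof
        fix z assume zS: "z \<in> S"
        have "z - (y0 \<bullet> z) *\<^sub>R y0 \<in> S'" unfolding S'_def using zS y0S less.prems(1) y0y0
          by (simp add: subspace_diff subspace_scale inner_diff_right)
        hence "z - (y0 \<bullet> z) *\<^sub>R y0 \<in> span U2" using U(5) unfolding U2_def
          by (metis span_mono subset_insertI subsetD)
        moreover have "(y0 \<bullet> z) *\<^sub>R y0 \<in> span U2" unfolding U2_def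
          by (simp add: span_base span_scale)
        ultimately show "z \<in> span U2" by (metis diff_add_cancel span_add)
      qed
    qed
    show ?thesis
      apply (rule exI[of _ U2], rule exI[of _ "lamU(y0 := lam)"])
      using U orth sp y0S y0n eig \<open>S' \<subseteq> S\<close> \<open>y0 \<notin> U\<close> unfolding U2_def by auto
  qed
qed



definition outer :: "real^'k::finite \<Rightarrow> real^'k \<Rightarrow> real^'k^'k" where
  "outer u w = (\<chi> i j. u$i * w$j)"

lemma outer_mv: "outer u w *v v = (w \<bullet> v) *\<^sub>R u"
  by (simp add: outer_def matrix_vector_mult_def vec_eq_iff inner_vec_def sum_distrib_left algebra_simps)

lemma sum_mv: "(\<Sum>i\<in>I. A i) *v v = (\<Sum>i\<in>I. A i *v (v::real^'k::finite))"
  by (induction I rule: infinite_finite_induct) (auto simp: matrix_vector_mult_add_rdistrib)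

lemma scaleR_mv: "(c *\<^sub>R A) *v v = c *\<^sub>R (A *v (v::real^'k::finite))"
  by (simp add: scaleR_matrix_vector_assoc)

lemma mv_sum: "A *v (\<Sum>i\<in>I. f i) = (\<Sum>i\<in>I. A *v (f i::real^'k::finite))"
  by (induction I rule: infinite_finite_induct) (auto simp: matrix_vector_right_distrib)

definition onb :: "(real^'k::finite) set \<Rightarrow> bool" where
  "onb U \<longleftrightarrow> finite U \<and> pairwise orthogonal U \<and> (\<forall>u\<in>U. norm u = 1) \<and> span U = UNIV"

lemma onb_inner: "onb U \<Longrightarrow> u \<in> U \<Longrightarrow> u' \<in> U \<Longrightarrow> u \<bullet> u' = (if u = u' then 1 else 0)"
  unfolding onb_def pairwise_def orthogonal_def by (auto simp: norm_eq_1)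

lemma onb_coeff:
  assumes "onb U" "u' \<in> U"
  shows "u' \<bullet> (\<Sum>u\<in>U. c u *\<^sub>R u) = c u'"
proof -
  have "u' \<bullet> (\<Sum>u\<in>U. c u *\<^sub>R u) = (\<Sum>u\<in>U. c u * (u' \<bullet> u))"
    by (simp add: inner_sum_right)
  also have "\<dots> = (\<Sum>u\<in>U. if u = u' then c u else 0)"
    using onb_inner[OF assms(1) assms(2)] by (intro sum.cong) auto
  also have "\<dots> = c u'" using assms unfolding onb_def by (simp add: sum.delta')
  finally show ?thesis .
qed

lemma onb_expand:
  assumes "onb U"
  shows "v = (\<Sum>u\<in>U. (u \<bullet> v) *\<^sub>R u)"
proof -
  define w where "w = v - (\<Sum>u\<in>U. (u \<bullet> v) *\<^sub>R u)"
  have "orthogonal w u" if "u \<in> U" for u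
    using onb_coeff[OF assms that, of "\<lambda>u. u \<bullet> v"] that unfolding w_def orthogonal_def
    by (simp add: inner_diff_right inner_commute)
  hence "orthogonal w w" using assms unfolding onb_def
    by (metis UNIV_I orthogonal_to_span)
  thus ?thesis unfolding w_def orthogonal_def by simp
qed

lemma onb_norm2:
  assumes "onb U"
  shows "(\<Sum>u\<in>U. c u *\<^sub>R u) \<bullet> (\<Sum>u\<in>U. d u *\<^sub>R u) = (\<Sum>u\<in>U. c u * d u)"
proof -
  have "(\<Sum>u\<in>U. c u *\<^sub>R u) \<bullet> (\<Sum>u\<in>U. d u *\<^sub>R u) = (\<Sum>u\<in>U. c u * (u \<bullet> (\<Sum>u\<in>U. d u *\<^sub>R u)))"
    by (simp add: inner_sum_left)
  also have "\<dots> = (\<Sum>u\<in>U. c u * d u)" using onb_coeff[OF assms] by simp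
  finally show ?thesis .
qed

definition eigb :: "real^'k::finite^'k \<Rightarrow> (real^'k) set \<Rightarrow> (real^'k \<Rightarrow> real) \<Rightarrow> bool" where
  "eigb M U lam \<longleftrightarrow> onb U \<and> (\<forall>u\<in>U. M *v u = lam u *\<^sub>R u)"

lemma spectral:
  fixes M :: "real^'k::finite^'k"
  assumes "transpose M = M"
  shows "\<exists>U lam. eigb M U lam"
  using spectral_sub[OF assms, of UNIV] unfolding eigb_def onb_def by auto

lemma eigb_mv:
  assumes "eigb M U lam"
  shows "M *v v = (\<Sum>u\<in>U. (lam u * (u \<bullet> v)) *\<^sub>R u)"
proof -
  have "M *v v = M *v (\<Sum>u\<in>U. (u \<bullet> v) *\<^sub>R u)" using onb_expand assms eigb_def by metis
  also have "\<dots> = (\<Sum>u\<in>U. (lam u * (u \<bullet> v)) *\<^sub>R u)"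
    using assms unfolding eigb_def by (simp add: mv_sum matrix_vector_mult_scaleR mult.commute)
  finally show ?thesis .
qed

lemma matpow_Suc: "matpow M (Suc j) = M ** matpow M j"
  by (simp add: matpow_def)

lemma matpow_eig:
  assumes "eigb M U lam"
  shows "matpow M j = (\<Sum>u\<in>U. (lam u ^ j) *\<^sub>R outer u u)"
proof -
  have "matpow M j *v v = (\<Sum>u\<in>U. (lam u ^ j * (u \<bullet> v)) *\<^sub>R u)" for v
  proof (induction j)
    case 0
    then show ?case using onb_expand[of U v] assms by (simp add: matpow_def eigb_def)
  next
    case (Suc j)
    have "matpow M (Suc j) *v v = M *v (matpow M j *v v)"
      by (simp add: matpow_Suc matrix_vector_mul_assoc)
    also have "\<dots> = (\<Sum>u\<in>U. (lam u ^ Suc j * (u \<bullet> v)) *\<^sub>R u)"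
      using assms unfolding Suc eigb_def by (simp add: mv_sum matrix_vector_mult_scaleR mult_ac)
    finally show ?case .
  qed
  moreover have "(\<Sum>u\<in>U. (lam u ^ j) *\<^sub>R outer u u) *v v = (\<Sum>u\<in>U. (lam u ^ j * (u \<bullet> v)) *\<^sub>R u)" for v
    by (simp add: sum_mv scaleR_mv outer_mv)
  ultimately show ?thesis by (simp add: matrix_eq)
qed

lemma mexp_eig:
  assumes "eigb M U lam"
  shows "mexp M = (\<Sum>u\<in>U. exp (lam u) *\<^sub>R outer u u)"
proof -
  have "(\<lambda>j. (1 / fact j :: real) *\<^sub>R matpow M j) = (\<lambda>j. \<Sum>u\<in>U. ((lam u ^ j /\<^sub>R fact j) *\<^sub>R outer u u))"
    by (simp add: matpow_eig[OF assms] scaleR_sum_right divide_inverse_commute)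
  moreover have "(\<lambda>j. \<Sum>u\<in>U. ((lam u ^ j /\<^sub>R fact j) *\<^sub>R outer u u)) sums (\<Sum>u\<in>U. exp (lam u) *\<^sub>R outer u u)"
    by (intro sums_sum sums_scaleR_left exp_converges)
  ultimately show ?thesis unfolding mexp_def by (simp add: sums_iff)
qed

lemma mexp_mv:
  assumes "eigb M U lam"
  shows "mexp M *v v = (\<Sum>u\<in>U. (exp (lam u) * (u \<bullet> v)) *\<^sub>R u)"
  by (simp add: mexp_eig[OF assms] sum_mv scaleR_mv outer_mv)

lemma eigb_scale: "eigb M U lam \<Longrightarrow> eigb (c *\<^sub>R M) U (\<lambda>u. c * lam u)"
  unfolding eigb_def by (simp add: scaleR_mv)



lemma right_deriv_le:
  fixes h :: "real \<Rightarrow> real"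
  assumes ab: "a \<le> b" and cont: "continuous_on {a..b} h"
    and der: "\<And>t. a \<le> t \<Longrightarrow> t < b \<Longrightarrow> (h has_real_derivative 0) (at t within {t..})"
  shows "h b \<le> h a"
proof (rule ccontr)
  assume "\<not> h b \<le> h a"
  hence hb: "h b > h a" by simp
  hence ab': "a < b" using ab by (cases "a = b") auto
  define e where "e = (h b - h a) / (2 * (b - a))"
  have e: "e > 0" unfolding e_def using hb ab' by simp
  define k where "k t = h t - h a - e * (t - a)" for t
  define Z where "Z = {t \<in> {a..b}. k t \<le> 0}"
  have contk: "continuous_on {a..b} k" unfolding k_def by (intro continuous_intros cont)
  have clZ: "closed Z" unfolding Z_def
    using continuous_on_closed_Collect_le[OF contk continuous_on_const[of _ 0]] by simp
  have aZ: "a \<in> Z" unfolding Z_def k_def using ab by simp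
  have bdd: "bdd_above Z" unfolding Z_def by (auto intro: bdd_aboveI[of _ b])
  have cZ: "Sup Z \<in> Z" using aZ by (intro closed_contains_Sup bdd clZ) auto
  define c where "c = Sup Z"
  have "e * (b - a) = (h b - h a) / 2" unfolding e_def using ab' by (simp add: field_simps)
  hence kb: "k b > 0" unfolding k_def using hb by simp
  have "c \<le> b" "k c \<le> 0" "a \<le> c" using cZ unfolding c_def Z_def by auto
  hence cb: "c < b" using kb by (cases "c = b") auto
  have dh: "(h has_real_derivative 0) (at c within {c..})" using der \<open>a \<le> c\<close> cb by auto
  have "(k has_real_derivative (0 - 0 - e * (1 - 0))) (at c within {c..})" unfolding k_def
    by (rule DERIV_diff[OF DERIV_diff[OF dh DERIV_const] DERIV_cmult[OF DERIV_diff[OF DERIV_ident DERIV_const]]])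
  then obtain d where d: "d > 0" "\<And>hh. hh > 0 \<Longrightarrow> c + hh \<in> {c..} \<Longrightarrow> hh < d \<Longrightarrow> k c > k (c + hh)"
    using has_real_derivative_neg_dec_right[of k "0 - 0 - e * (1 - 0)" c "{c..}"] e by auto
  define hh where "hh = min (d / 2) (b - c)"
  have hh: "hh > 0" "hh < d" "c + hh \<le> b" unfolding hh_def using d cb by auto
  have "k (c + hh) < k c" using d(2)[of hh] hh by auto
  hence "c + hh \<in> Z" unfolding Z_def using hh \<open>k c \<le> 0\<close> \<open>a \<le> c\<close> by auto
  hence "c + hh \<le> c" unfolding c_def using bdd by (rule cSup_upper)
  thus False using hh by simp
qed

lemma right_deriv_const:
  fixes h :: "real \<Rightarrow> real"
  assumes cont: "continuous_on {a..b} h"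
    and der: "\<And>t. a \<le> t \<Longrightarrow> t < b \<Longrightarrow> (h has_real_derivative 0) (at t within {t..})"
    and t: "a \<le> t" "t \<le> b"
  shows "h t = h a"
proof -
  have c1: "continuous_on {a..t} h" using t by (intro continuous_on_subset[OF cont]) auto
  have "h t \<le> h a" by (rule right_deriv_le[OF t(1) c1]) (use der t in auto)
  moreover have "- h t \<le> - h a"
  proof (rule right_deriv_le[of a t "\<lambda>s. - h s", OF t(1)])
    show "continuous_on {a..t} (\<lambda>s. - h s)" using c1 by (rule continuous_on_minus)
    fix s assume "a \<le> s" "s < t"
    hence "(h has_real_derivative 0) (at s within {s..})" using der t by auto
    from DERIV_minus[OF this] show "((\<lambda>s. - h s) has_real_derivative 0) (at s within {s..})" by simp
  qed
  ultimately show ?thesis by simp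
qed

lemma scalar_ode:
  fixes c :: "real \<Rightarrow> real"
  assumes cont: "continuous_on {a..b} c"
    and der: "\<And>t. a \<le> t \<Longrightarrow> t < b \<Longrightarrow> (c has_real_derivative (- lam * c t)) (at t within {t..})"
    and t: "a \<le> t" "t \<le> b"
  shows "c t = exp (- lam * (t - a)) * c a"
proof -
  define g where "g t = exp (lam * (t - a)) * c t" for t
  have "g t = g a"
  proof (rule right_deriv_const[OF _ _ t])
    show "continuous_on {a..b} g" unfolding g_def by (intro continuous_on_mult cont) (intro continuous_intros)
  next
    fix s assume s: "a \<le> s" "s < b"
    have l: "((\<lambda>t. lam * (t - a)) has_real_derivative lam * (1 - 0)) (at s within {s..})"
      by (rule DERIV_cmult[OF DERIV_diff[OF DERIV_ident DERIV_const]])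
    have "((\<lambda>t. exp (lam * (t - a))) has_real_derivative exp (lam * (s - a)) * (lam * (1 - 0))) (at s within {s..})"
      by (rule DERIV_chain2[OF DERIV_exp l])
    hence d1: "((\<lambda>t. exp (lam * (t - a))) has_real_derivative exp (lam * (s - a)) * lam) (at s within {s..})"
      by simp
    have "(g has_real_derivative (exp (lam * (s - a)) * lam * c s + (- lam * c s) * exp (lam * (s - a)))) (at s within {s..})"
      unfolding g_def by (rule DERIV_mult[OF d1 der[OF s]])
    thus "(g has_real_derivative 0) (at s within {s..})" by (simp add: algebra_simps)
  qed
  hence "exp (lam * (t - a)) * c t = c a" unfolding g_def by simp
  hence "exp (- (lam * (t - a))) * (exp (lam * (t - a)) * c t) = exp (- (lam * (t - a))) * c a" by simp
  moreover have "exp (- (lam * (t - a))) * (exp (lam * (t - a)) * c t) = c t"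
    by (simp add: mult.assoc[symmetric] exp_add[symmetric])
  ultimately show ?thesis by simp
qed



lemma sum_pair_UNIV: "(\<Sum>p\<in>(UNIV::('n::finite \<times> 'd::finite) set). f p) = (\<Sum>i\<in>UNIV. \<Sum>a\<in>UNIV. f (i, a))"
  by (subst UNIV_Times_UNIV[symmetric]) (simp add: sum.cartesian_product)

lemma inner_block: "v \<bullet> w = (\<Sum>i\<in>UNIV. block v i \<bullet> block w i)"
  by (simp add: inner_vec_def block_def sum_pair_UNIV)

lemma if_mult0: "(if c then X else 0) * (y::real) = (if c then X * y else 0)"
  by simp

lemma lap_entry: "lap W $ (i, a) $ (j, b) = (if i = j then (\<Sum>j\<in>UNIV. mabs (W i j)) $ a $ b else 0) - W i j $ a $ b"
  by (simp add: lap_def)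

lemma matrix_vector_mult_minus_left: "(- A) *v x = - (A *v (x::real^'k::finite))"
  by (simp add: matrix_vector_mult_def vec_eq_iff sum_negf)

lemma block_lap_mv:
  "block (lap W *v v) i = (\<Sum>j\<in>UNIV. mabs (W i j)) *v block v i - (\<Sum>j\<in>UNIV. W i j *v block v j)"
proof -
  have "block (lap W *v v) i $ a = ((\<Sum>j\<in>UNIV. mabs (W i j)) *v block v i - (\<Sum>j\<in>UNIV. W i j *v block v j)) $ a" for a
  proof -
    have "block (lap W *v v) i $ a = (\<Sum>j\<in>UNIV. \<Sum>b\<in>UNIV. ((if i = j then (\<Sum>j\<in>UNIV. mabs (W i j)) $ a $ b else 0) - W i j $ a $ b) * v $ (j, b))"
      by (simp add: block_def matrix_vector_mult_def lap_entry sum_pair_UNIV)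
    also have "\<dots> = (\<Sum>j\<in>UNIV. \<Sum>b\<in>UNIV. (if i = j then (\<Sum>j\<in>UNIV. mabs (W i j)) $ a $ b * v $ (j, b) else 0)) - (\<Sum>j\<in>UNIV. \<Sum>b\<in>UNIV. W i j $ a $ b * v $ (j, b))"
      by (simp add: sum_subtractf[symmetric] left_diff_distrib if_mult0)
    also have "(\<Sum>j\<in>UNIV. \<Sum>b\<in>UNIV. (if i = j then (\<Sum>j\<in>UNIV. mabs (W i j)) $ a $ b * v $ (j, b) else 0)) = (\<Sum>b\<in>UNIV. (\<Sum>j\<in>UNIV. mabs (W i j)) $ a $ b * v $ (i, b))"
      by (simp add: sum.swap[of _ UNIV UNIV] sum.delta)
    finally show ?thesis
      by (simp add: block_def matrix_vector_mult_def sum_component)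
  qed
  thus ?thesis by (simp add: vec_eq_iff)
qed

lemma transpose_uminus: "transpose (- A) = - transpose (A::real^'k::finite^'k)"
  by (simp add: transpose_def vec_eq_iff)

lemma mabs_sym: "transpose A = A \<Longrightarrow> transpose (mabs A) = mabs A"
  by (simp add: mabs_def transpose_uminus)

lemma mabs_psd: "psd A \<or> nsd A \<Longrightarrow> psd (mabs A)"
  by (auto simp: mabs_def psd_def nsd_def matrix_vector_mult_minus_left)

lemma lap_sym:
  assumes sym: "\<And>i j. transpose (W i j) = W i j" and swap: "\<And>i j. W i j = W j i"
  shows "transpose (lap W) = lap W"
proof -
  have ms: "mabs (W i j) $ b $ a = mabs (W i j) $ a $ b" for i j a b
  proof -
    have "transpose (mabs (W i j)) $ a $ b = mabs (W i j) $ a $ b" using mabs_sym[OF sym[of i j]] by simp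
    thus ?thesis by (simp add: transpose_def)
  qed
  have ws: "W j i $ b $ a = W i j $ a $ b" for i j a b
  proof -
    have "transpose (W i j) $ a $ b = W i j $ a $ b" using sym[of i j] by simp
    thus ?thesis using swap[of i j] by (simp add: transpose_def)
  qed
  have "transpose (lap W) $ (i, a) $ (j, b) = lap W $ (i, a) $ (j, b)" for i a j b
  proof -
    have "transpose (lap W) $ (i, a) $ (j, b) = lap W $ (j, b) $ (i, a)" by (simp add: transpose_def)
    also have "\<dots> = lap W $ (i, a) $ (j, b)"
    proof (cases "i = j")
      case True
      have "(\<Sum>k\<in>UNIV. mabs (W i k)) $ b $ a = (\<Sum>k\<in>UNIV. mabs (W i k)) $ a $ b"
        by (simp add: sum_component ms)
      then show ?thesis using True by (simp only: lap_entry ws if_True)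
    next
      case False
      then show ?thesis by (simp only: lap_entry ws if_False) simp
    qed
    finally show ?thesis .
  qed
  thus ?thesis by (simp add: vec_eq_iff)
qed

lemma lap_psd:
  assumes sym: "\<And>i j. transpose (W i j) = W i j" and swap: "\<And>i j. W i j = W j i"
    and sgn: "\<And>i j. psd (W i j) \<or> nsd (W i j)"
  shows "0 \<le> v \<bullet> (lap W *v v)"
proof -
  define x where "x = block v"
  define T where "T i j = x i \<bullet> (mabs (W i j) *v x i) + x j \<bullet> (mabs (W i j) *v x j) - 2 * (x i \<bullet> (W i j *v x j))" for i j
  have Tnn: "T i j \<ge> 0" for i j
  proof -
    have c: "x j \<bullet> (W i j *v x i) = x i \<bullet> (W i j *v x j)"
      using sym_inner[OF sym[of i j], of "x j" "x i"] by (simp add: inner_commute)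
    show ?thesis
    proof (cases "psd (W i j)")
      case True
      have "(x i - x j) \<bullet> (W i j *v (x i - x j)) = x i \<bullet> (W i j *v x i) - x i \<bullet> (W i j *v x j) - x j \<bullet> (W i j *v x i) + x j \<bullet> (W i j *v x j)"
        by (simp add: matrix_vector_mult_diff_distrib inner_diff_left inner_diff_right)
      moreover have "T i j = x i \<bullet> (W i j *v x i) + x j \<bullet> (W i j *v x j) - 2 * (x i \<bullet> (W i j *v x j))"
        using True by (simp add: T_def mabs_def)
      moreover have "0 \<le> (x i - x j) \<bullet> (W i j *v (x i - x j))" using True unfolding psd_def by blast
      ultimately show ?thesis using c by linarith
    next
      case False
      hence n: "nsd (W i j)" using sgn by blast
      have "(x i + x j) \<bullet> (W i j *v (x i + x j)) = x i \<bullet> (W i j *v x i) + x i \<bullet> (W i j *v x j) + x j \<bullet> (W i j *v x i) + x j \<bullet> (W i j *v x j)"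
        by (simp add: matrix_vector_right_distrib inner_add_left inner_add_right)
      moreover have "T i j = - (x i \<bullet> (W i j *v x i)) - x j \<bullet> (W i j *v x j) - 2 * (x i \<bullet> (W i j *v x j))"
        using False by (simp add: T_def mabs_def matrix_vector_mult_minus_left)
      moreover have "(x i + x j) \<bullet> (W i j *v (x i + x j)) \<le> 0" using n unfolding nsd_def by blast
      ultimately show ?thesis using c by linarith
    qed
  qed
  have e1: "v \<bullet> (lap W *v v) = (\<Sum>i\<in>UNIV. \<Sum>j\<in>UNIV. x i \<bullet> (mabs (W i j) *v x i) - x i \<bullet> (W i j *v x j))"
    by (simp add: inner_block block_lap_mv x_def sum_mv inner_diff_right inner_sum_right sum_subtractf)
  have e2: "(\<Sum>i\<in>UNIV. \<Sum>j\<in>UNIV. x j \<bullet> (mabs (W i j) *v x j)) = (\<Sum>i\<in>UNIV. \<Sum>j\<in>UNIV. x i \<bullet> (mabs (W i j) *v x i))"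
    by (subst sum.swap) (simp add: swap[of _ "_::'a"])
  have "2 * (v \<bullet> (lap W *v v)) = (\<Sum>i\<in>UNIV. \<Sum>j\<in>UNIV. T i j)"
    unfolding e1 T_def using e2 by (simp add: sum_subtractf sum.distrib sum_distrib_left)
  also have "\<dots> \<ge> 0" using Tnn by (intro sum_nonneg) auto
  finally show ?thesis by simp
qed

lemma psd_null:
  fixes L :: "real^'k::finite^'k"
  assumes sym: "transpose L = L" and psd: "\<And>v. 0 \<le> v \<bullet> (L *v v)" and z: "v \<bullet> (L *v v) = 0"
  shows "L *v v = 0"
proof -
  obtain U lam where E: "eigb L U lam" using spectral[OF sym] by blast
  have onb: "onb U" using E eigb_def by blast
  have lnn: "lam u \<ge> 0" if "u \<in> U" for u
  proof -
    have "u \<bullet> (L *v u) = lam u" using E that onb_inner[OF onb that that] unfolding eigb_def by simp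
    thus ?thesis using psd[of u] by simp
  qed
  have vv: "v = (\<Sum>u\<in>U. (u \<bullet> v) *\<^sub>R u)" by (rule onb_expand[OF onb])
  have "v \<bullet> (L *v v) = (\<Sum>u\<in>U. (u \<bullet> v) *\<^sub>R u) \<bullet> (\<Sum>u\<in>U. (lam u * (u \<bullet> v)) *\<^sub>R u)"
    unfolding eigb_mv[OF E, of v] by (simp only: vv[symmetric])
  also have "\<dots> = (\<Sum>u\<in>U. (u \<bullet> v) * (lam u * (u \<bullet> v)))" by (rule onb_norm2[OF onb])
  finally have "v \<bullet> (L *v v) = (\<Sum>u\<in>U. (u \<bullet> v) * (lam u * (u \<bullet> v)))" .
  hence "(\<Sum>u\<in>U. lam u * (u \<bullet> v)^2) = 0" using z by (simp add: power2_eq_square mult_ac)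
  hence "\<forall>u\<in>U. lam u * (u \<bullet> v)^2 = 0"
    using onb unfolding onb_def by (subst (asm) sum_nonneg_eq_0_iff) (auto intro: mult_nonneg_nonneg lnn)
  hence "\<forall>u\<in>U. lam u * (u \<bullet> v) = 0" by (auto simp: power2_eq_square)
  hence "(\<Sum>u\<in>U. (lam u * (u \<bullet> v)) *\<^sub>R u) = 0" by (intro sum.neutral) simp
  thus ?thesis using eigb_mv[OF E, of v] by simp
qed



lemma mexp_scale_mv:
  assumes "eigb L U lam"
  shows "mexp (c *\<^sub>R L) *v v = (\<Sum>u\<in>U. (exp (c * lam u) * (u \<bullet> v)) *\<^sub>R u)"
  using mexp_mv[OF eigb_scale[OF assms, of c]] by simp

lemma eigb_lam:
  assumes "eigb L U lam" "u \<in> U"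
  shows "u \<bullet> (L *v u) = lam u"
  using assms onb_inner[of U u u] unfolding eigb_def by simp

lemma mexp_nonexp:
  fixes L :: "real^'k::finite^'k"
  assumes sym: "transpose L = L" and psd: "\<And>v. 0 \<le> v \<bullet> (L *v v)" and s: "s \<ge> 0"
  shows "norm (mexp (- (s *\<^sub>R L)) *v v) \<le> norm v"
proof -
  obtain U lam where E: "eigb L U lam" using spectral[OF sym] by blast
  have onb: "onb U" using E eigb_def by blast
  have lnn: "lam u \<ge> 0" if "u \<in> U" for u using psd[of u] eigb_lam[OF E that] by simp
  have m: "mexp (- (s *\<^sub>R L)) *v v = (\<Sum>u\<in>U. (exp (- s * lam u) * (u \<bullet> v)) *\<^sub>R u)"
    using mexp_scale_mv[OF E, of "- s" v] by simp
  have "(norm (mexp (- (s *\<^sub>R L)) *v v))^2 = (\<Sum>u\<in>U. (exp (- s * lam u) * (u \<bullet> v)) * (exp (- s * lam u) * (u \<bullet> v)))"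
    unfolding m power2_norm_eq_inner by (rule onb_norm2[OF onb])
  also have "\<dots> \<le> (\<Sum>u\<in>U. (u \<bullet> v) * (u \<bullet> v))"
  proof (rule sum_mono)
    fix u assume u: "u \<in> U"
    have "exp (- s * lam u) \<le> 1" using s lnn[OF u] by (simp add: mult_nonneg_nonneg)
    moreover have "exp (- s * lam u) \<ge> 0" by simp
    ultimately have "(exp (- s * lam u))^2 \<le> 1" by (simp add: power_le_one)
    hence "(exp (- s * lam u))^2 * (u \<bullet> v)^2 \<le> 1 * (u \<bullet> v)^2" by (intro mult_right_mono) auto
    thus "exp (- s * lam u) * (u \<bullet> v) * (exp (- s * lam u) * (u \<bullet> v)) \<le> (u \<bullet> v) * (u \<bullet> v)"
      by (simp add: power2_eq_square mult_ac)
  qed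
  also have "\<dots> = (norm v)^2"
    unfolding power2_norm_eq_inner using onb_norm2[OF onb, of "\<lambda>u. u \<bullet> v" "\<lambda>u. u \<bullet> v"] onb_expand[OF onb, of v]
    by simp
  finally show ?thesis by (simp add: power_mono_iff)
qed

lemma mexp_fix:
  fixes L :: "real^'k::finite^'k"
  assumes sym: "transpose L = L" and z: "L *v v = 0"
  shows "mexp (c *\<^sub>R L) *v v = v"
proof -
  obtain U lam where E: "eigb L U lam" using spectral[OF sym] by blast
  have onb: "onb U" using E eigb_def by blast
  have "(exp (c * lam u) * (u \<bullet> v)) = u \<bullet> v" if u: "u \<in> U" for u
  proof -
    have "lam u * (u \<bullet> v) = (L *v u) \<bullet> v" using E u unfolding eigb_def by simp
    also have "\<dots> = 0" using sym_inner[OF sym] z by simp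
    finally have "lam u = 0 \<or> u \<bullet> v = 0" by simp
    thus ?thesis by auto
  qed
  hence "mexp (c *\<^sub>R L) *v v = (\<Sum>u\<in>U. (u \<bullet> v) *\<^sub>R u)"
    unfolding mexp_scale_mv[OF E] by (intro sum.cong) auto
  also have "\<dots> = v" using onb_expand[OF onb] by metis
  finally show ?thesis .
qed

lemma mexp_symm:
  fixes L :: "real^'k::finite^'k"
  assumes sym: "transpose L = L"
  shows "w \<bullet> (mexp (c *\<^sub>R L) *v v) = (mexp (c *\<^sub>R L) *v w) \<bullet> v"
proof -
  obtain U lam where E: "eigb L U lam" using spectral[OF sym] by blast
  show ?thesis unfolding mexp_scale_mv[OF E]
    by (simp add: inner_sum_right inner_sum_left inner_commute mult_ac)
qed

lemma linear_ode:
  fixes L :: "real^'k::finite^'k" and x :: "real \<Rightarrow> real^'k"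
  assumes sym: "transpose L = L"
    and cont: "continuous_on {a..b} x"
    and der: "\<And>t. a \<le> t \<Longrightarrow> t < b \<Longrightarrow> (x has_vector_derivative (- (L *v x t))) (at t within {t..})"
    and t: "a \<le> t" "t \<le> b"
  shows "x t = mexp (- ((t - a) *\<^sub>R L)) *v x a"
proof -
  obtain U lam where E: "eigb L U lam" using spectral[OF sym] by blast
  have onb: "onb U" using E eigb_def by blast
  have c: "u \<bullet> x t = exp (- lam u * (t - a)) * (u \<bullet> x a)" if u: "u \<in> U" for u
  proof (rule scalar_ode[of a b "\<lambda>s. u \<bullet> x s" "lam u", OF _ _ t])
    show "continuous_on {a..b} (\<lambda>s. u \<bullet> x s)" by (intro continuous_intros cont)
  next
    fix s assume s: "a \<le> s" "s < b"
    have "((\<lambda>s. u \<bullet> x s) has_vector_derivative u \<bullet> (- (L *v x s))) (at s within {s..})"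
      by (rule bounded_linear.has_vector_derivative[OF bounded_linear_inner_right der[OF s]])
    moreover have "u \<bullet> (- (L *v x s)) = - lam u * (u \<bullet> x s)"
      using sym_inner[OF sym, of u "x s"] E u unfolding eigb_def by simp
    ultimately show "((\<lambda>s. u \<bullet> x s) has_real_derivative - lam u * (u \<bullet> x s)) (at s within {s..})"
      by (simp add: has_real_derivative_iff_has_vector_derivative)
  qed
  have "x t = (\<Sum>u\<in>U. (u \<bullet> x t) *\<^sub>R u)" by (rule onb_expand[OF onb])
  also have "\<dots> = (\<Sum>u\<in>U. (exp (- (t - a) * lam u) * (u \<bullet> x a)) *\<^sub>R u)"
    by (intro sum.cong refl) (simp add: c mult_ac right_diff_distrib)
  also have "\<dots> = mexp ((a - t) *\<^sub>R L) *v x a"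
    using mexp_scale_mv[OF E, of "a - t" "x a"] by simp
  also have "(a - t) *\<^sub>R L = - ((t - a) *\<^sub>R L)" by (simp add: scaleR_diff_left)
  finally show ?thesis .
qed



lemma sorted_concat_rep: "sorted xs \<Longrightarrow> sorted (concat (map (\<lambda>e. replicate (f e) e) xs))"
proof (induction xs)
  case Nil then show ?case by simp
next
  case (Cons x xs)
  have "\<forall>b\<in>set (concat (map (\<lambda>e. replicate (f e) e) xs)). x \<le> b"
    using Cons.prems by auto
  then show ?case using Cons by (auto simp: sorted_append)
qed

lemma desc_index:
  fixes ys :: "real list"
  assumes s: "sorted (rev ys)" and cnt: "length (filter (\<lambda>x. q < x) ys) \<ge> m + 1"
  shows "q < ys ! m"
proof (rule ccontr)
  assume "\<not> q < ys ! m"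
  hence le: "ys ! m \<le> q" by simp
  have "{i. i < length ys \<and> q < ys ! i} \<subseteq> {..<m}"
  proof
    fix i assume i: "i \<in> {i. i < length ys \<and> q < ys ! i}"
    show "i \<in> {..<m}"
    proof (rule ccontr)
      assume "i \<notin> {..<m}"
      hence "m \<le> i" by simp
      moreover have "sorted_wrt (\<ge>) ys" using s by (simp add: sorted_wrt_rev)
      ultimately have "ys ! i \<le> ys ! m" using i
        by (metis (mono_tags, lifting) le_neq_implies_less mem_Collect_eq order.refl order.strict_trans1 sorted_wrt_nth_less)
      thus False using i le by simp
    qed
  qed
  hence "card {i. i < length ys \<and> q < ys ! i} \<le> m"
    by (metis card_lessThan card_mono finite_lessThan)
  thus False using cnt by (simp add: length_filter_conv_card)
qed

lemma eigvals_sub: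
  assumes E: "eigb P U lam"
  shows "eigvals P \<subseteq> lam ` U"
proof
  fix e assume "e \<in> eigvals P"
  then obtain v where v: "v \<noteq> 0" "P *v v = e *\<^sub>R v" unfolding eigvals_def by blast
  have onb: "onb U" using E eigb_def by blast
  have "\<exists>u\<in>U. u \<bullet> v \<noteq> 0"
  proof (rule ccontr)
    assume "\<not> ?thesis"
    hence "v = (\<Sum>u\<in>U. (u \<bullet> v) *\<^sub>R u)" "(\<Sum>u\<in>U. (u \<bullet> v) *\<^sub>R u) = 0" using onb_expand[OF onb, of v] by auto
    thus False using v by simp
  qed
  then obtain u where u: "u \<in> U" "u \<bullet> v \<noteq> 0" by blast
  have "u \<bullet> (P *v v) = lam u * (u \<bullet> v)"
    using onb_coeff[OF onb u(1), of "\<lambda>u. lam u * (u \<bullet> v)"] eigb_mv[OF E, of v] by simp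
  moreover have "u \<bullet> (P *v v) = e * (u \<bullet> v)" using v by simp
  ultimately have "e = lam u" using u by simp
  thus "e \<in> lam ` U" using u by blast
qed

lemma len_filter_rep:
  "length (filter p (concat (map (\<lambda>e. replicate (f e) e) xs))) = sum_list (map (\<lambda>e. if p e then f e else 0) xs)"
  by (induction xs) auto

lemma filter_count:
  assumes fin: "finite (eigvals P)"
  shows "length (filter (\<lambda>x. q < x) (eig_desc P)) = (\<Sum>e\<in>{e\<in>eigvals P. q < e}. eig_mult P e)"
proof -
  have "length (filter (\<lambda>x. q < x) (eig_desc P)) =
        sum_list (map (\<lambda>e. if q < e then eig_mult P e else 0) (sorted_list_of_set (eigvals P)))"
    unfolding eig_desc_def by (simp add: rev_filter[symmetric] len_filter_rep)
  also have "\<dots> = (\<Sum>e\<in>eigvals P. if q < e then eig_mult P e else 0)"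
    using fin by (simp add: sum_list_distinct_conv_sum_set)
  also have "\<dots> = (\<Sum>e\<in>{e\<in>eigvals P. q < e}. eig_mult P e)"
    using fin by (simp add: sum.inter_filter)
  finally show ?thesis .
qed

lemma contraction:
  fixes P :: "real^'k::finite^'k"
  assumes sym: "transpose P = P" and N: "subspace N"
    and fixN: "\<And>v. v \<in> N \<Longrightarrow> P *v v = v"
    and mu: "mu (dim N + 1) P \<le> q" and q1: "q < 1"
    and y: "\<And>v. v \<in> N \<Longrightarrow> v \<bullet> y = 0"
  shows "y \<bullet> (P *v y) \<le> q * (y \<bullet> y)"
proof -
  obtain U lam where E: "eigb P U lam" using spectral[OF sym] by blast
  have onb: "onb U" using E eigb_def by blast
  have finU: "finite U" using onb onb_def by blast
  have fin: "finite (eigvals P)" using eigvals_sub[OF E] finU by (meson finite_imageI finite_subset)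
  define G where "G = {u\<in>U. q < lam u}"
  have GU: "G \<subseteq> U" unfolding G_def by auto
  have indep: "independent V" if "V \<subseteq> U" for V
  proof (rule pairwise_orthogonal_independent)
    show "pairwise orthogonal V" using that onb unfolding onb_def by (auto intro: pairwise_subset)
    show "0 \<notin> V"
    proof
      assume "0 \<in> V"
      hence "norm (0::real^'k) = 1" using that onb unfolding onb_def by blast
      thus False by simp
    qed
  qed
  have cardG: "card G \<le> dim N"
  proof (rule ccontr)
    assume "\<not> card G \<le> dim N"
    hence big: "card G \<ge> dim N + 1" by simp
    have "card G = (\<Sum>e\<in>lam ` G. card {u\<in>G. lam u = e})"
      using finU GU sum.image_gen[of G "\<lambda>_. 1::nat" lam] by (simp add: finite_subset)
    also have "\<dots> \<le> (\<Sum>e\<in>lam ` G. eig_mult P e)"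
    proof (rule sum_mono)
      fix e assume "e \<in> lam ` G"
      have "{u\<in>G. lam u = e} \<subseteq> {v. P *v v = e *\<^sub>R v}" using E GU unfolding eigb_def by auto
      moreover have "independent {u\<in>G. lam u = e}" using GU by (intro indep) auto
      ultimately show "card {u\<in>G. lam u = e} \<le> eig_mult P e" unfolding eig_mult_def
        by (rule independent_card_le_dim)
    qed
    also have "\<dots> \<le> (\<Sum>e\<in>{e\<in>eigvals P. q < e}. eig_mult P e)"
    proof (rule sum_mono2)
      show "finite {e\<in>eigvals P. q < e}" using fin by simp
      show "lam ` G \<subseteq> {e\<in>eigvals P. q < e}"
      proof
        fix e assume "e \<in> lam ` G"
        then obtain u where u: "u \<in> G" "e = lam u" by blast
        have "norm u = 1" "P *v u = lam u *\<^sub>R u" using u GU onb E unfolding onb_def eigb_def by auto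
        hence "u \<noteq> 0" "P *v u = lam u *\<^sub>R u" by auto
        thus "e \<in> {e\<in>eigvals P. q < e}" using u unfolding eigvals_def G_def by auto
      qed
    qed simp
    finally have "length (filter (\<lambda>x. q < x) (eig_desc P)) \<ge> dim N + 1"
      using big filter_count[OF fin, of q] by simp
    moreover have "sorted (rev (eig_desc P))" unfolding eig_desc_def
      by (simp add: sorted_concat_rep)
    ultimately have "q < eig_desc P ! (dim N)" by (intro desc_index)
    thus False using mu unfolding mu_def by simp
  qed
  have NG: "N \<subseteq> span G"
  proof
    fix v assume v: "v \<in> N"
    have c0: "u \<bullet> v = 0" if u: "u \<in> U" "u \<notin> G" for u
    proof -
      have "lam u * (u \<bullet> v) = (P *v u) \<bullet> v" using E u unfolding eigb_def by simp
      also have "\<dots> = u \<bullet> v" using sym_inner[OF sym, of u v] fixN[OF v] by simp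
      finally have "(lam u - 1) * (u \<bullet> v) = 0" by (simp add: algebra_simps)
      moreover have "lam u \<noteq> 1" using u q1 unfolding G_def by auto
      ultimately show ?thesis by simp
    qed
    have "v = (\<Sum>u\<in>U. (u \<bullet> v) *\<^sub>R u)" by (rule onb_expand[OF onb])
    also have "\<dots> = (\<Sum>u\<in>G. (u \<bullet> v) *\<^sub>R u)"
      using c0 GU finU by (intro sum.mono_neutral_right) auto
    also have "\<dots> \<in> span G" by (intro span_sum span_scale span_base)
    finally show "v \<in> span G" .
  qed
  have "dim (span G) = card G" using indep[OF GU] by (rule dim_span_eq_card_independent)
  hence "N = span G" using NG cardG by (intro subspace_dim_equal N subspace_span) auto
  hence yG: "u \<bullet> y = 0" if "u \<in> G" for u using y that span_base by blast
  have vv: "y = (\<Sum>u\<in>U. (u \<bullet> y) *\<^sub>R u)" by (rule onb_expand[OF onb])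
  have "y \<bullet> (P *v y) = (\<Sum>u\<in>U. (u \<bullet> y) *\<^sub>R u) \<bullet> (\<Sum>u\<in>U. (lam u * (u \<bullet> y)) *\<^sub>R u)"
    unfolding eigb_mv[OF E, of y] by (simp only: vv[symmetric])
  also have "\<dots> = (\<Sum>u\<in>U. (u \<bullet> y) * (lam u * (u \<bullet> y)))" by (rule onb_norm2[OF onb])
  also have "\<dots> \<le> (\<Sum>u\<in>U. q * ((u \<bullet> y) * (u \<bullet> y)))"
  proof (rule sum_mono)
    fix u assume u: "u \<in> U"
    show "(u \<bullet> y) * (lam u * (u \<bullet> y)) \<le> q * ((u \<bullet> y) * (u \<bullet> y))"
    proof (cases "u \<in> G")
      case True then show ?thesis using yG by simp
    next
      case False
      hence "lam u \<le> q" using u unfolding G_def by auto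
      hence "lam u * ((u \<bullet> y) * (u \<bullet> y)) \<le> q * ((u \<bullet> y) * (u \<bullet> y))"
        by (intro mult_right_mono) auto
      thus ?thesis by (simp add: mult_ac)
    qed
  qed
  also have "\<dots> = q * (y \<bullet> y)"
    using onb_norm2[OF onb, of "\<lambda>u. u \<bullet> y" "\<lambda>u. u \<bullet> y"] vv by (simp add: sum_distrib_left)
  finally show ?thesis .
qed



lemma null_space_subspace: "subspace (null_space (M::real^'k::finite^'k))"
  unfolding null_space_def subspace_def
  by (simp add: matrix_vector_right_distrib matrix_vector_mult_scaleR)

lemma piece_exists:
  fixes tk :: "nat \<Rightarrow> real"
  assumes tk0: "tk 0 = 0" and inf: "filterlim tk at_top sequentially" and t: "t \<ge> 0"
  shows "\<exists>k. tk k \<le> t \<and> t < tk (Suc k)"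
proof -
  have "\<forall>\<^sub>F n in sequentially. t < tk n" using inf by (simp add: filterlim_at_top_dense)
  then obtain K where K: "t < tk K" by (meson eventually_sequentially le_refl)
  define K0 where "K0 = (LEAST n. t < tk n)"
  have K0: "t < tk K0" unfolding K0_def by (rule LeastI[of _ K], rule K)
  have "K0 \<noteq> 0"
  proof
    assume "K0 = 0" thus False using K0 tk0 t by simp
  qed
  then obtain k where k: "K0 = Suc k" by (cases K0) auto
  have "k < (LEAST n. t < tk n)" using k unfolding K0_def by simp
  hence "\<not> t < tk k" by (rule not_less_Least)
  thus ?thesis using K0 k by (intro exI[of _ k]) auto
qed

lemma proj_props:
  assumes B: "finite B" "pairwise orthogonal B" "\<forall>b\<in>B. norm b = 1"
  shows "(\<Sum>b\<in>B. (b \<bullet> x0) *\<^sub>R b) \<in> span B"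
    and "\<And>v. v \<in> span B \<Longrightarrow> v \<bullet> (x0 - (\<Sum>b\<in>B. (b \<bullet> x0) *\<^sub>R b)) = 0"
proof -
  show "(\<Sum>b\<in>B. (b \<bullet> x0) *\<^sub>R b) \<in> span B" by (intro span_sum span_scale span_base)
  have o: "orthogonal (x0 - (\<Sum>b\<in>B. (b \<bullet> x0) *\<^sub>R b)) b'" if b': "b' \<in> B" for b'
  proof -
    have "b' \<bullet> (\<Sum>b\<in>B. (b \<bullet> x0) *\<^sub>R b) = (\<Sum>b\<in>B. (b \<bullet> x0) * (b' \<bullet> b))"
      by (simp add: inner_sum_right)
    also have "\<dots> = (\<Sum>b\<in>B. if b = b' then b \<bullet> x0 else 0)"
      using B b' unfolding pairwise_def orthogonal_def
      by (intro sum.cong) (auto simp: norm_eq_1)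
    also have "\<dots> = b' \<bullet> x0" using B b' by (simp add: sum.delta')
    finally show ?thesis unfolding orthogonal_def by (simp add: inner_diff_right inner_commute)
  qed
  fix v assume "v \<in> span B"
  thus "v \<bullet> (x0 - (\<Sum>b\<in>B. (b \<bullet> x0) *\<^sub>R b)) = 0"
    using orthogonal_to_span[OF _ o] by (simp add: orthogonal_def inner_commute)
qed

lemma proj_unique:
  assumes N: "subspace N" and p: "p \<in> N" "\<And>v. v \<in> N \<Longrightarrow> v \<bullet> (x0 - p) = 0"
    and p': "p' \<in> N" "\<And>v. v \<in> N \<Longrightarrow> v \<bullet> (x0 - p') = 0"
  shows "p = p'"
proof -
  have "p - p' \<in> N" using N p p' by (simp add: subspace_diff)
  hence "(p - p') \<bullet> (x0 - p') - (p - p') \<bullet> (x0 - p) = 0" using p(2) p'(2) by simp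
  hence "(p - p') \<bullet> (p - p') = 0" by (simp add: inner_diff_right inner_diff_left algebra_simps)
  thus ?thesis by simp
qed

lemma mexp_transpose:
  fixes L :: "real^'k::finite^'k"
  assumes sym: "transpose L = L"
  shows "transpose (mexp (c *\<^sub>R L)) = mexp (c *\<^sub>R L)"
proof -
  obtain U lam where E: "eigb L U lam" using spectral[OF sym] by blast
  define c' where "c' u = exp (c * lam u)" for u
  have ent: "(\<Sum>u\<in>U. c' u *\<^sub>R outer u u) $ i $ j = (\<Sum>u\<in>U. c' u * (u$i * u$j))" for i j
    by (simp add: sum_component outer_def)
  have "transpose (\<Sum>u\<in>U. c' u *\<^sub>R outer u u) $ i $ j = (\<Sum>u\<in>U. c' u *\<^sub>R outer u u) $ i $ j" for i j
  proof -
    have "transpose (\<Sum>u\<in>U. c' u *\<^sub>R outer u u) $ i $ j = (\<Sum>u\<in>U. c' u *\<^sub>R outer u u) $ j $ i"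
      by (simp add: transpose_def)
    also have "\<dots> = (\<Sum>u\<in>U. c' u * (u$i * u$j))" unfolding ent by (intro sum.cong refl) simp
    finally show ?thesis unfolding ent .
  qed
  hence "transpose (\<Sum>u\<in>U. c' u *\<^sub>R outer u u) = (\<Sum>u\<in>U. c' u *\<^sub>R outer u u)"
    by (simp add: vec_eq_iff)
  thus ?thesis unfolding mexp_eig[OF eigb_scale[OF E]] c'_def .
qed

lemma Phi_Suc:
  "k1 \<le> k2 \<Longrightarrow> Phi W tk (Suc k2) k1 = mexp (- ((tk (Suc k2) - tk k2) *\<^sub>R lap (W (tk k2)))) ** Phi W tk k2 k1"
  unfolding Phi_def by (simp only: upt_Suc_append fold_append comp_def fold_Cons fold_Nil id_def)

lemma Phi_refl: "Phi W tk k k = mat 1"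
  unfolding Phi_def by simp



theorem theorem11:
  fixes W :: "real \<Rightarrow> 'n::finite \<Rightarrow> 'n \<Rightarrow> real^'d::finite^'d"
    and tk :: "nat \<Rightarrow> real" and \<alpha> :: real
    and kl :: "nat \<Rightarrow> nat" and q :: real
    and x :: "real \<Rightarrow> real^('n \<times> 'd)"
  assumes n_gt1: "CARD('n) \<ge> 2"
    and W_sym: "\<And>t i j. t \<ge> 0 \<Longrightarrow> transpose (W t i j) = W t i j"
    and W_swap: "\<And>t i j. t \<ge> 0 \<Longrightarrow> W t i j = W t j i"
    and W_diag: "\<And>t i. t \<ge> 0 \<Longrightarrow> W t i i = 0"
    and W_sign: "\<And>i j. (\<forall>t\<ge>0. psd (W t i j)) \<or> (\<forall>t\<ge>0. nsd (W t i j))"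
    and tk0: "tk 0 = 0"
    and alpha_pos: "\<alpha> > 0"
    and dwell: "\<And>k. tk (Suc k) - tk k \<ge> \<alpha>"
    and tk_inf: "filterlim tk at_top sequentially"
    and piecewise: "\<And>k t. tk k \<le> t \<Longrightarrow> t < tk (Suc k) \<Longrightarrow> W t = W (tk k)"
    and kl_mono: "strict_mono kl"
    and kl0: "kl 0 = 0"
    and q: "0 < q" "q < 1"
    and null_eq: "\<And>l. null_space (Ltilde W (tk (kl l)) (tk (kl (Suc l))))
                      = null_space (Ltilde W (tk (kl (Suc l))) (tk (kl (Suc (Suc l)))))"
    and contr: "\<And>l. mu (dim (null_space (Ltilde W (tk (kl l)) (tk (kl (Suc l))))) + 1)
                      (transpose (Phi W tk (kl (Suc l)) (kl l)) ** Phi W tk (kl (Suc l)) (kl l)) \<le> q"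
    and x_cont: "continuous_on {0..} x"
    and x_ode: "\<And>t. t \<ge> 0 \<Longrightarrow> (x has_vector_derivative (- (lap (W t) *v x t))) (at t within {t..})"
  shows "cluster_consensus x \<and>
         (\<forall>B. finite B \<and> pairwise orthogonal B \<and> (\<forall>b\<in>B. norm b = 1) \<and>
              span B = null_space (Ltilde W (tk (kl 0)) (tk (kl 1)))
            \<longrightarrow> (x \<longlongrightarrow> (\<Sum>b\<in>B. (b \<bullet> x 0) *\<^sub>R b)) at_top)"
proof -
  define L where "L k = lap (W (tk k))" for k
  have tk_step: "tk k < tk (Suc k)" for k using dwell[of k] alpha_pos by linarith
  have tk_mono: "tk k \<le> tk k'" if "k \<le> k'" for k k'
    using lift_Suc_mono_le[of tk, OF _ that] tk_step less_imp_le by blast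
  have tk_smono: "tk k < tk k'" if "k < k'" for k k'
    using lift_Suc_mono_less[of tk, OF _ that] tk_step by blast
  have tk_nn: "tk k \<ge> 0" for k using tk_mono[of 0 k] tk0 by simp
  have lapsym: "transpose (lap (W t)) = lap (W t)" if "t \<ge> 0" for t
    by (rule lap_sym) (use W_sym W_swap that in auto)
  have lappsd: "0 \<le> v \<bullet> (lap (W t) *v v)" if "t \<ge> 0" for t v
  proof (rule lap_psd)
    show "transpose (W t i j) = W t i j" for i j using W_sym that by blast
    show "W t i j = W t j i" for i j using W_swap that by blast
    show "psd (W t i j) \<or> nsd (W t i j)" for i j using W_sign[of i j] that by blast
  qed
  have Lsym: "transpose (L k) = L k" for k unfolding L_def using lapsym tk_nn by blast
  have Lpsd: "0 \<le> v \<bullet> (L k *v v)" for k v unfolding L_def using lappsd tk_nn by blast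
  have piece: "x t = mexp (- ((t - tk k) *\<^sub>R L k)) *v x (tk k)" if t: "tk k \<le> t" "t \<le> tk (Suc k)" for k t
  proof (rule linear_ode[OF Lsym _ _ t])
    show "continuous_on {tk k..tk (Suc k)} x"
      by (rule continuous_on_subset[OF x_cont]) (use tk_nn in auto)
    fix s assume s: "tk k \<le> s" "s < tk (Suc k)"
    have "s \<ge> 0" using s tk_nn[of k] by linarith
    moreover have "W s = W (tk k)" using piecewise s by blast
    ultimately show "(x has_vector_derivative - (L k *v x s)) (at s within {s..})"
      using x_ode[of s] unfolding L_def by simp
  qed
  have Phi_x: "Phi W tk k2 k1 *v x (tk k1) = x (tk k2)" if "k1 \<le> k2" for k1 k2
    using that
  proof (induction k2 rule: dec_induct)
    case base then show ?case by (simp add: Phi_refl)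
  next
    case (step k2)
    have "Phi W tk (Suc k2) k1 *v x (tk k1) = mexp (- ((tk (Suc k2) - tk k2) *\<^sub>R L k2)) *v (Phi W tk k2 k1 *v x (tk k1))"
      unfolding Phi_Suc[OF step(1)] L_def by (simp add: matrix_vector_mul_assoc)
    also have "\<dots> = x (tk (Suc k2))" unfolding step(3) using piece[of k2 "tk (Suc k2)"] tk_step[of k2] by simp
    finally show ?case .
  qed

  have integ: "((\<lambda>t. lap (W t)) has_integral (\<Sum>k\<in>{k1..<j}. (tk (Suc k) - tk k) *\<^sub>R L k)) {tk k1..tk j}"
    if "k1 \<le> j" for k1 j
    using that
  proof (induction j rule: dec_induct)
    case base
    have "((\<lambda>t. lap (W t)) has_integral 0) {tk k1}" by (rule has_integral_refl(2))
    then show ?case by simp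
  next
    case (step j)
    have c: "((\<lambda>t. L j) has_integral (tk (Suc j) - tk j) *\<^sub>R L j) {tk j..tk (Suc j)}"
      using has_integral_const_real[of "L j" "tk j" "tk (Suc j)"] tk_step[of j] by simp
    have "((\<lambda>t. lap (W t)) has_integral (tk (Suc j) - tk j) *\<^sub>R L j) {tk j..tk (Suc j)}"
    proof (rule has_integral_spike_finite[OF _ _ c])
      show "finite {tk (Suc j)}" by simp
      fix t assume "t \<in> {tk j..tk (Suc j)} - {tk (Suc j)}"
      hence "tk j \<le> t" "t < tk (Suc j)" by auto
      thus "lap (W t) = L j" unfolding L_def using piecewise by metis
    qed
    from has_integral_combine[OF tk_mono[OF step(1)] tk_mono[of j "Suc j"] step(3) this]
    show ?case using step(1) by (simp add: add.commute)
  qed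
  have kl_inc: "l \<le> kl l" for l using kl_mono by (rule seq_suble)
  have kl_lt: "kl l < kl (Suc l)" for l using kl_mono by (simp add: strict_mono_def)
  have kl_cover: "\<exists>l. kl l \<le> k \<and> k < kl (Suc l)" for k
  proof -
    have K: "k < kl (Suc k)" using kl_inc[of "Suc k"] by simp
    define l0 where "l0 = (LEAST l. k < kl l)"
    have l0: "k < kl l0" unfolding l0_def by (rule LeastI[of _ "Suc k"], rule K)
    have "l0 \<noteq> 0"
    proof
      assume "l0 = 0" thus False using l0 kl0 by simp
    qed
    then obtain l where l: "l0 = Suc l" by (cases l0) auto
    have "l < (LEAST l. k < kl l)" using l unfolding l0_def by simp
    hence "\<not> k < kl l" by (rule not_less_Least)
    thus ?thesis using l0 l by (intro exI[of _ l]) auto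
  qed
  define Nl where "Nl l = null_space (Ltilde W (tk (kl l)) (tk (kl (Suc l))))" for l
  have Nl_eq: "Nl l = Nl 0" for l
    by (induction l) (use null_eq in \<open>auto simp: Nl_def\<close>)
  define N where "N = Nl 0"
  have Nsub: "subspace N" unfolding N_def Nl_def by (rule null_space_subspace)
  have Nl_null: "L k *v v = 0" if v: "v \<in> Nl l" and k: "kl l \<le> k" "k < kl (Suc l)" for v l k
  proof -
    define a where "a = tk (kl l)"
    define b where "b = tk (kl (Suc l))"
    define S where "S = (\<Sum>k\<in>{kl l..<kl (Suc l)}. (tk (Suc k) - tk k) *\<^sub>R L k)"
    have ab: "a < b" unfolding a_def b_def using tk_smono kl_lt by blast
    have "integral {a..b} (\<lambda>t. lap (W t)) = S"
      unfolding a_def b_def S_def using integ[of "kl l" "kl (Suc l)"] kl_lt[of l]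
      by (simp add: integral_unique)
    hence Lt: "Ltilde W a b = (1 / (b - a)) *\<^sub>R S" unfolding Ltilde_def by simp
    have "Ltilde W a b *v v = 0" using v unfolding Nl_def null_space_def a_def b_def by simp
    hence "(1 / (b - a)) *\<^sub>R (S *v v) = 0" unfolding Lt by (simp add: scaleR_mv)
    hence "S *v v = 0" using ab by simp
    hence "v \<bullet> (S *v v) = 0" by simp
    hence sum0: "(\<Sum>k\<in>{kl l..<kl (Suc l)}. (tk (Suc k) - tk k) * (v \<bullet> (L k *v v))) = 0"
      unfolding S_def by (simp add: sum_mv scaleR_mv inner_sum_right)
    have "\<forall>k\<in>{kl l..<kl (Suc l)}. (tk (Suc k) - tk k) * (v \<bullet> (L k *v v)) = 0"
      using sum0 by (subst (asm) sum_nonneg_eq_0_iff)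
        (auto intro!: mult_nonneg_nonneg Lpsd simp: less_imp_le[OF tk_step, simplified])
    hence "(tk (Suc k) - tk k) * (v \<bullet> (L k *v v)) = 0" using k by auto
    hence "v \<bullet> (L k *v v) = 0" using tk_step[of k] by simp
    thus ?thesis by (rule psd_null[OF Lsym Lpsd])
  qed
  have NL: "L k *v v = 0" if "v \<in> N" for k v
  proof -
    obtain l where "kl l \<le> k" "k < kl (Suc l)" using kl_cover by blast
    moreover have "v \<in> Nl l" using that Nl_eq[of l] unfolding N_def by simp
    ultimately show ?thesis using Nl_null by blast
  qed

  obtain B0 where B0: "B0 \<subseteq> N" "pairwise orthogonal B0" "\<And>b. b \<in> B0 \<Longrightarrow> norm b = 1" "independent B0"
      "card B0 = dim N" "span B0 = N"
    by (rule orthonormal_basis_subspace[OF Nsub]) blast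
  have B03: "\<forall>b\<in>B0. norm b = 1" using B0(3) by blast
  have finB0: "finite B0" using B0(4) by (rule independent_imp_finite)
  define p where "p = (\<Sum>b\<in>B0. (b \<bullet> x 0) *\<^sub>R b)"
  have pN: "p \<in> N" using proj_props(1)[OF finB0 B0(2) B03, of "x 0"] B0(6) unfolding p_def by simp
  have p_orth: "v \<bullet> (x 0 - p) = 0" if "v \<in> N" for v
    using proj_props(2)[OF finB0 B0(2) B03, of v "x 0"] B0(6) that unfolding p_def by simp
  have mneg: "- (s *\<^sub>R L k) = (- s) *\<^sub>R L k" for s k by simp
  have Einv: "v \<bullet> (mexp (- (s *\<^sub>R L k)) *v y) = v \<bullet> y" if "v \<in> N" for v s k y
  proof -
    have "v \<bullet> (mexp (- (s *\<^sub>R L k)) *v y) = (mexp (- (s *\<^sub>R L k)) *v v) \<bullet> y"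
      unfolding mneg by (rule mexp_symm[OF Lsym])
    also have "mexp (- (s *\<^sub>R L k)) *v v = v" unfolding mneg by (rule mexp_fix[OF Lsym NL[OF that]])
    finally show ?thesis .
  qed
  have Efix: "mexp (- (s *\<^sub>R L k)) *v v = v" if "v \<in> N" for v s k
    unfolding mneg by (rule mexp_fix[OF Lsym NL[OF that]])
  have inv_k: "v \<bullet> x (tk k) = v \<bullet> x 0" if "v \<in> N" for v k
  proof (induction k)
    case 0 then show ?case using tk0 by simp
  next
    case (Suc k)
    have "x (tk (Suc k)) = mexp (- ((tk (Suc k) - tk k) *\<^sub>R L k)) *v x (tk k)"
      using piece[of k "tk (Suc k)"] tk_step[of k] by simp
    then show ?case using Einv[OF that] Suc by simp
  qed
  have inv_t: "v \<bullet> x t = v \<bullet> x 0" if vN: "v \<in> N" and t0: "t \<ge> 0" for v t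
  proof -
    obtain k where k: "tk k \<le> t" "t < tk (Suc k)" using piece_exists[OF tk0 tk_inf t0] by blast
    have "x t = mexp (- ((t - tk k) *\<^sub>R L k)) *v x (tk k)" using piece k by simp
    thus ?thesis using Einv[OF vN] inv_k[OF vN] by simp
  qed
  define r where "r t = x t - p" for t
  have r_piece: "r t = mexp (- ((t - tk k) *\<^sub>R L k)) *v r (tk k)" if "tk k \<le> t" "t \<le> tk (Suc k)" for k t
    unfolding r_def using piece[OF that] Efix[OF pN] by (simp add: matrix_vector_mult_diff_distrib)
  have norm_piece: "norm (r t) \<le> norm (r (tk k))" if "tk k \<le> t" "t \<le> tk (Suc k)" for k t
    unfolding r_piece[OF that] using that by (intro mexp_nonexp[OF Lsym Lpsd]) simp
  have r_dec: "norm (r (tk k')) \<le> norm (r (tk k))" if "k \<le> k'" for k k'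
    using that
  proof (induction k' rule: dec_induct)
    case base then show ?case by simp
  next
    case (step k')
    have "norm (r (tk (Suc k'))) \<le> norm (r (tk k'))" using norm_piece[of k' "tk (Suc k')"] tk_step[of k'] by simp
    then show ?case using step by simp
  qed
  have r_orth: "v \<bullet> r t = 0" if "v \<in> N" "t \<ge> 0" for v t
    using inv_t[OF that] p_orth[OF that(1)] unfolding r_def by (simp add: inner_diff_right)
  have Phi_fix: "Phi W tk k2 k1 *v v = v \<and> transpose (Phi W tk k2 k1) *v v = v" if "v \<in> N" "k1 \<le> k2" for v k1 k2
    using that(2)
  proof (induction k2 rule: dec_induct)
    case base then show ?case by (simp add: Phi_refl transpose_mat)
  next
    case (step k2)
    define M where "M = mexp (- ((tk (Suc k2) - tk k2) *\<^sub>R L k2))"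
    have PS: "Phi W tk (Suc k2) k1 = M ** Phi W tk k2 k1" unfolding Phi_Suc[OF step(1)] M_def L_def ..
    have Mv: "M *v v = v" unfolding M_def by (rule Efix[OF that(1)])
    have Mt: "transpose M = M" unfolding M_def mneg by (rule mexp_transpose[OF Lsym])
    show ?case unfolding PS using step(3) Mv Mt
      by (simp add: matrix_vector_mul_assoc[symmetric] matrix_transpose_mul)
  qed
  have r_tkl: "r (tk (kl l)) \<bullet> r (tk (kl l)) \<le> q ^ l * (r 0 \<bullet> r 0)" for l
  proof (induction l)
    case 0 then show ?case using kl0 tk0 by simp
  next
    case (Suc l)
    define Ph where "Ph = Phi W tk (kl (Suc l)) (kl l)"
    define P where "P = transpose Ph ** Ph"
    define y where "y = r (tk (kl l))"
    have le: "kl l \<le> kl (Suc l)" using kl_lt[of l] by simp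
    have Psym: "transpose P = P" unfolding P_def by (simp add: matrix_transpose_mul)
    have Pfix: "P *v v = v" if "v \<in> N" for v
      using Phi_fix[OF that le] unfolding P_def Ph_def by (simp add: matrix_vector_mul_assoc[symmetric])
    have Pmu: "mu (dim N + 1) P \<le> q"
      using contr[of l] Nl_eq[of l] unfolding P_def Ph_def N_def Nl_def by simp
    have yo: "v \<bullet> y = 0" if "v \<in> N" for v unfolding y_def using r_orth[OF that tk_nn] .
    have c: "y \<bullet> (P *v y) \<le> q * (y \<bullet> y)" by (rule contraction[OF Psym Nsub Pfix Pmu q(2) yo])
    have "Ph *v y = r (tk (kl (Suc l)))"
      unfolding y_def r_def Ph_def using Phi_x[OF le] Phi_fix[OF pN le]
      by (simp add: matrix_vector_mult_diff_distrib)
    moreover have "y \<bullet> (P *v y) = (Ph *v y) \<bullet> (Ph *v y)"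
    proof -
      have "y \<bullet> (P *v y) = y \<bullet> (transpose Ph *v (Ph *v y))" unfolding P_def
        by (simp only: matrix_vector_mul_assoc)
      also have "\<dots> = y \<bullet> ((Ph *v y) v* Ph)" by simp
      also have "\<dots> = ((Ph *v y) v* Ph) \<bullet> y" by (rule inner_commute)
      also have "\<dots> = (Ph *v y) \<bullet> (Ph *v y)" by (rule dot_lmul_matrix)
      finally show ?thesis .
    qed
    ultimately have "r (tk (kl (Suc l))) \<bullet> r (tk (kl (Suc l))) \<le> q * (y \<bullet> y)" using c by simp
    also have "\<dots> \<le> q * (q ^ l * (r 0 \<bullet> r 0))" unfolding y_def using Suc q(1)
      by (intro mult_left_mono) auto
    finally show ?case by simp
  qed

  have conv: "(x \<longlongrightarrow> p) at_top"
  proof (rule tendstoI)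
    fix e :: real assume e: "e > 0"
    define R where "R = r 0 \<bullet> r 0"
    have R0: "R \<ge> 0" unfolding R_def by simp
    have "e^2 / (R + 1) > 0" using e R0 by simp
    then obtain l where l: "q ^ l < e^2 / (R + 1)" using real_arch_pow_inv[OF _ q(2)] by blast
    have ql: "q ^ l * R < e^2"
    proof -
      have "q ^ l * R \<le> q ^ l * (R + 1)" using q(1) by simp
      also have "\<dots> < e^2" using l R0 by (simp add: pos_less_divide_eq)
      finally show ?thesis .
    qed
    have "dist (x t) p < e" if t: "t \<ge> tk (kl l)" for t
    proof -
      have t0: "t \<ge> 0" using t tk_nn[of "kl l"] by linarith
      obtain k where k: "tk k \<le> t" "t < tk (Suc k)" using piece_exists[OF tk0 tk_inf t0] by blast
      have "kl l \<le> k"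
      proof (rule ccontr)
        assume "\<not> kl l \<le> k"
        hence "Suc k \<le> kl l" by simp
        hence "tk (Suc k) \<le> tk (kl l)" by (rule tk_mono)
        thus False using k t by simp
      qed
      have "norm (r t) \<le> norm (r (tk k))" using norm_piece[of k t] k by simp
      also have "\<dots> \<le> norm (r (tk (kl l)))" by (rule r_dec[OF \<open>kl l \<le> k\<close>])
      finally have nr: "norm (r t) \<le> norm (r (tk (kl l)))" .
      have "(norm (r (tk (kl l))))^2 \<le> q ^ l * R" unfolding R_def power2_norm_eq_inner by (rule r_tkl)
      hence "(norm (r (tk (kl l))))^2 < e^2" using ql by simp
      hence "norm (r (tk (kl l))) < e" using e by (simp add: power_less_imp_less_base)
      hence "norm (r t) < e" using nr by simp
      thus ?thesis unfolding r_def by (simp add: dist_norm)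
    qed
    thus "\<forall>\<^sub>F t in at_top. dist (x t) p < e" unfolding eventually_at_top_linorder by blast
  qed
  have part2: "(x \<longlongrightarrow> (\<Sum>b\<in>B. (b \<bullet> x 0) *\<^sub>R b)) at_top"
    if B: "finite B" "pairwise orthogonal B" "\<forall>b\<in>B. norm b = 1"
      "span B = null_space (Ltilde W (tk (kl 0)) (tk (kl 1)))" for B
  proof -
    have sB: "span B = N" using B(4) unfolding N_def Nl_def by simp
    have "(\<Sum>b\<in>B. (b \<bullet> x 0) *\<^sub>R b) = p"
    proof (rule proj_unique[OF Nsub _ _ pN p_orth])
      show "(\<Sum>b\<in>B. (b \<bullet> x 0) *\<^sub>R b) \<in> N" using proj_props(1)[OF B(1-3)] sB by simp
      show "v \<bullet> (x 0 - (\<Sum>b\<in>B. (b \<bullet> x 0) *\<^sub>R b)) = 0" if "v \<in> N" for v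
        using proj_props(2)[OF B(1-3)] sB that by simp
    qed
    thus ?thesis using conv by simp
  qed
  have blk: "((\<lambda>t. block (x t) i) \<longlongrightarrow> block p i) at_top" for i
    unfolding block_def by (intro tendsto_vec_lambda tendsto_vec_nth conv)
  define c where "c i = block p i" for i
  define Pt where "Pt = (\<lambda>i. {j. c j = c i}) ` (UNIV :: 'n set)"
  have "partition_on (UNIV :: 'n set) Pt"
    unfolding partition_on_def disjoint_def Pt_def by auto
  moreover have "\<forall>P1\<in>Pt. \<forall>P2\<in>Pt. \<forall>i\<in>P1. \<forall>j\<in>P2. (c i = c j \<longleftrightarrow> P1 = P2)"
    unfolding Pt_def by auto
  ultimately have "cluster_consensus x"
    unfolding cluster_consensus_def c_def using blk by blast
  thus ?thesis using part2 by blast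
qed


end
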